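(* Let $S$ be an infinite closed subgroup of $\mathrm{SO}(2)\times\mathrm{SO}(2)$. Then there exists a nonzero $\phi\in L^2(\mathcal P,\lambda,\mathbb{R})$ fixed by $S$ under the action $T'$ if and only if $S=H(N,q,p)$ for some odd integer $N\ge 1$ and some odd, relatively prime integers $q,p$, where $H(N,q,p)=\{(R(q\theta),R(p\theta+2\pi i/N)):\theta\in\mathbb{R},\ i\in\{0,\dots,N-1\}\}$. (These groups are the infinite potential little groups.)
   Context: $R(\theta)=\begin{pmatrix}\cos\theta & \sin\theta\\ -\sin\theta & \cos\theta\end{pmatrix}$. $\mathcal P=P_1(\mathbb{R})\times P_1(\mathbb{R})$ with $P_1(\mathbb{R})=\mathbb{R}\cup\{\infty\}$; angular coordinates $x=\cot(\rho/2)$, $y=\cot(\sigma/2)$; $\lambda$ is the $\mathrm{SO}(2)\times\mathrm{SO}(2)$-invariant measure $d\rho\,d\sigma$; $L^2(\mathcal P,\lambda,\mathbb{R})$ is the real Hilbert space of square-integrable real functions on $\mathcal P$. For $g=\begin{pmatrix}a&b\\c&d\end{pmatrix}\in\mathrm{SL}(2,\mathbb{R})$: $xg=\frac{xa+c}{xb+d}$, $k_g(x)=\left(\frac{(xb+d)^2+(xa+c)^2}{1+x^2}\right)^{1/2}$, $s_g(x)=\frac{xb+d}{|xb+d|}$, and $(T'(g,h)\phi)(x,y)=k_g^{-3}(x)s_g(x)k_h^{-3}(y)s_h(y)\phi(xg,yh)$. $\phi$ is fixed by $S$ if $T'(s)\phi=\phi$ in $L^2$ for all $s\in S$. *)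

theory Defs
  imports "HOL-Analysis.Analysis" "HOL-Probability.Probability"
begin

definition rot :: "real \<Rightarrow> real^2^2" where
  "rot \<theta> = vector [vector [cos \<theta>, sin \<theta>], vector [- sin \<theta>, cos \<theta>]]"

definition SO2 :: "(real^2^2) set" where
  "SO2 = range rot"

definition closed_subgroup_SO2xSO2 :: "((real^2^2) \<times> (real^2^2)) set \<Rightarrow> bool" where
  "closed_subgroup_SO2xSO2 S \<longleftrightarrow>
     S \<subseteq> SO2 \<times> SO2 \<and> (mat 1, mat 1) \<in> S \<and>
     (\<forall>g\<in>S. \<forall>h\<in>S. (fst g ** fst h, snd g ** snd h) \<in> S) \<and>
     (\<forall>g\<in>S. (matrix_inv (fst g), matrix_inv (snd g)) \<in> S) \<and>
     closed S"

definition H :: "nat \<Rightarrow> int \<Rightarrow> int \<Rightarrow> ((real^2^2) \<times> (real^2^2)) set" where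
  "H N q p = {(rot (of_int q * \<theta>), rot (of_int p * \<theta> + 2 * pi * real i / real N)) | \<theta> i. i < N}"

text \<open>For g = ((a,b),(c,d)): x g = (x a + c)/(x b + d), k_g, s_g.
  Points of P_1(R) are represented by the coordinate x = cot(rho/2) in R;
  the single point infinity is a null set for lambda.\<close>
definition mob :: "real^2^2 \<Rightarrow> real \<Rightarrow> real" where
  "mob g x = (x * g$1$1 + g$2$1) / (x * g$1$2 + g$2$2)"

definition kfac :: "real^2^2 \<Rightarrow> real \<Rightarrow> real" where
  "kfac g x = sqrt (((x * g$1$2 + g$2$2)^2 + (x * g$1$1 + g$2$1)^2) / (1 + x^2))"

definition sfac :: "real^2^2 \<Rightarrow> real \<Rightarrow> real" where
  "sfac g x = (x * g$1$2 + g$2$2) / \<bar>x * g$1$2 + g$2$2\<bar>"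

definition Tprime :: "(real^2^2) \<times> (real^2^2) \<Rightarrow> (real \<times> real \<Rightarrow> real) \<Rightarrow> real \<times> real \<Rightarrow> real" where
  "Tprime gh \<phi> xy =
     inverse (kfac (fst gh) (fst xy) ^ 3) * sfac (fst gh) (fst xy) *
     inverse (kfac (snd gh) (snd xy) ^ 3) * sfac (snd gh) (snd xy) *
     \<phi> (mob (fst gh) (fst xy), mob (snd gh) (snd xy))"

text \<open>The invariant measure d rho d sigma, written in the coordinates x = cot(rho/2),
  y = cot(sigma/2): d rho = 2/(1+x^2) dx.\<close>
definition lam :: "(real \<times> real) measure" where
  "lam = density (lborel \<Otimes>\<^sub>M lborel) (\<lambda>(x,y). ennreal (4 / ((1 + x^2) * (1 + y^2))))"

definition L2 :: "(real \<times> real \<Rightarrow> real) \<Rightarrow> bool" where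
  "L2 \<phi> \<longleftrightarrow> \<phi> \<in> borel_measurable lam \<and> integrable lam (\<lambda>z. (\<phi> z)^2)"

end

theory Submission
  imports Defs "HOL-Probability.Sinc_Integral"
begin



lemma rot_idx[simp]: "rot t $1$1 = cos t" "rot t $1$2 = sin t" "rot t $2$1 = - sin t" "rot t $2$2 = cos t"
  by (simp_all add: rot_def)

lemma mat_eq2: "(A::real^2^2) = B \<longleftrightarrow> A$1$1 = B$1$1 \<and> A$1$2 = B$1$2 \<and> A$2$1 = B$2$1 \<and> A$2$2 = B$2$2"
  by (auto simp: vec_eq_iff forall_2)

lemma rot_mult: "rot a ** rot b = rot (a + b)"
  by (simp add: mat_eq2 matrix_matrix_mult_def sum_2 cos_add sin_add algebra_simps)

lemma rot_zero: "rot 0 = mat 1"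
  by (simp add: mat_eq2 mat_def)

lemma rot_inv: "matrix_inv (rot a) = rot (- a)"
proof -
  have ex: "\<exists>A'. rot a ** A' = mat 1 \<and> A' ** rot a = mat 1"
    by (rule exI[of _ "rot (-a)"]) (simp add: rot_mult rot_zero)
  let ?B = "matrix_inv (rot a)"
  have B: "rot a ** ?B = mat 1" unfolding matrix_inv_def using someI_ex[OF ex] by blast
  have "rot (-a) = rot (-a) ** (rot a ** ?B)" using B by (simp add: matrix_mul_rid)
  also have "\<dots> = ?B" by (simp add: matrix_mul_assoc rot_mult rot_zero matrix_mul_lid)
  finally show ?thesis by simp
qed

lemma rot_eq_iff: "rot a = rot b \<longleftrightarrow> (\<exists>k::int. a - b = 2 * pi * k)"
proof
  assume "rot a = rot b"
  then have "cos a = cos b" "sin a = sin b" by (metis rot_idx)+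
  then have "cos (a - b) = 1" by (simp add: cos_diff power2_eq_square[symmetric])
  then show "\<exists>k::int. a - b = 2 * pi * k" using cos_one_2pi_int by (auto simp: algebra_simps)
next
  assume "\<exists>k::int. a - b = 2 * pi * k"
  then obtain k::int where "a = b + 2*pi*k" by (auto simp: algebra_simps)
  then show "rot a = rot b" by (simp add: rot_def cos_add sin_add mult.assoc[symmetric])
qed

lemma rot_lam: "rot t = (\<chi> i j. cos t * (rot 0) $ i $ j + sin t * (rot (pi/2)) $ i $ j)"
  unfolding mat_eq2 by simp

lemma continuous_rot: "continuous_on UNIV rot"
  apply (subst rot_lam[abs_def])
  apply (intro continuous_on_vec_lambda continuous_intros)
  done




definition zz :: "real \<Rightarrow> complex" where
  "zz x = Complex x 1 / complex_of_real (sqrt (1 + x^2))"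

definition DD :: "real \<Rightarrow> real \<Rightarrow> real" where "DD t x = x * sin t + cos t"

lemma sqrt_pos1: "sqrt (1 + x^2) > 0"
proof -
  have "0 < 1 + x^2" by (intro add_pos_nonneg) auto
  then show ?thesis by simp
qed

lemma kfac_rot: "kfac (rot t) x = 1"
proof -
  have "(x * sin t + cos t)^2 + (x * cos t + - sin t)^2 = (1 + x^2) * (sin t ^2 + cos t^2)"
    by algebra
  also have "\<dots> = 1 + x^2" by simp
  finally have "(x * sin t + cos t)^2 + (x * cos t + - sin t)^2 = 1 + x^2" .
  moreover have "1 + x^2 \<noteq> 0" using sqrt_pos1[of x] by auto
  ultimately show ?thesis unfolding kfac_def by simp
qed

lemma sfac_rot: "sfac (rot t) x = sgn (DD t x)"
  proof -
  have "\<And>d::real. d / \<bar>d\<bar> = sgn d" by (auto simp: sgn_if)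
  then show ?thesis unfolding sfac_def DD_def by simp
qed

lemma mob_rot: "mob (rot t) x = (x * cos t - sin t) / DD t x"
  unfolding mob_def DD_def by simp


lemma norm_zz: "norm (zz x) = 1"
  using sqrt_pos1[of x] unfolding zz_def by (simp add: norm_divide complex_norm power2_eq_square add.commute)

lemma zz_nz: "zz x \<noteq> 0"
  using norm_zz[of x] by auto

lemma zz_mob:
  assumes D: "DD t x \<noteq> 0"
  shows "zz (mob (rot t) x) = zz x * cis t * complex_of_real (sgn (DD t x))"
proof -
  let ?D = "DD t x" let ?m = "mob (rot t) x"
  have e1: "1 + ?m^2 = (1 + x^2) / ?D^2"
  proof -
    have "(x * sin t + cos t)^2 + (x * cos t - sin t)^2 = (1 + x^2) * (sin t ^2 + cos t^2)"
      by algebra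
    then have "?D^2 + (x * cos t - sin t)^2 = 1 + x^2" by (simp add: DD_def)
    then show ?thesis using D by (simp add: mob_rot field_simps power_divide)
  qed
  have e2: "sqrt (1 + ?m^2) = sqrt (1 + x^2) / \<bar>?D\<bar>"
    using e1 by (simp add: real_sqrt_divide)
  have e3: "Complex ?m 1 = Complex x 1 * cis t / complex_of_real ?D"
    using D by (simp add: mob_rot complex_eq_iff field_simps DD_def)
  have "zz ?m = Complex x 1 * cis t / complex_of_real ?D * complex_of_real \<bar>?D\<bar> / complex_of_real (sqrt (1 + x^2))"
    unfolding zz_def e2 e3 using sqrt_pos1[of x] D by (simp add: field_simps)
  also have "\<dots> = zz x * cis t * complex_of_real (\<bar>?D\<bar> / ?D)"
    unfolding zz_def using D by (simp add: field_simps)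
  also have "\<bar>?D\<bar> / ?D = sgn ?D" using D by (simp add: sgn_if)
  finally show ?thesis .
qed

definition phi :: "int \<Rightarrow> int \<Rightarrow> real \<times> real \<Rightarrow> real" where
  "phi m n z = Re (zz (fst z) powi m * zz (snd z) powi n)"

lemma sgn_powi_odd: "odd k \<Longrightarrow> s \<noteq> 0 \<Longrightarrow> (complex_of_real (sgn (s::real))) powi k = complex_of_real (sgn s)"
proof -
  assume k: "odd k" and s: "s \<noteq> 0"
  show ?thesis
  proof (cases "s > 0")
    case True then show ?thesis by simp
  next
    case False then have "sgn s = -1" using s by (simp add: sgn_if)
    then show ?thesis using k by simp
  qed
qed

lemma phi_inv:
  assumes m: "odd m" and n: "odd n" and Dx: "DD a x \<noteq> 0" and Dy: "DD b y \<noteq> 0"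
    and k: "of_int m * a + of_int n * b = 2 * pi * of_int k"
  shows "Tprime (rot a, rot b) (phi m n) (x, y) = phi m n (x, y)"
proof -
  let ?sa = "sgn (DD a x)" let ?sb = "sgn (DD b y)"
  have c: "cis a powi m * cis b powi n = 1"
  proof -
    have "cis a powi m * cis b powi n = cis (of_int m * a + of_int n * b)"
      by (simp add: cis_power_int cis_mult)
    also have "\<dots> = 1" unfolding k by simp
    finally show ?thesis .
  qed
  have "zz (mob (rot a) x) powi m * zz (mob (rot b) y) powi n
     = (zz x powi m * zz y powi n) * (cis a powi m * cis b powi n) * complex_of_real (?sa * ?sb)"
    using Dx Dy
    by (simp add: zz_mob power_int_mult_distrib sgn_powi_odd m n del: of_real_mult)  (simp add: ac_simps)
  then have "phi m n (mob (rot a) x, mob (rot b) y)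
     = Re ((zz x powi m * zz y powi n) * (cis a powi m * cis b powi n) * complex_of_real (?sa * ?sb))"
    unfolding phi_def by simp
  also have "\<dots> = ?sa * ?sb * phi m n (x,y)" unfolding c phi_def by (simp add: mult.commute)
  finally have "phi m n (mob (rot a) x, mob (rot b) y) = ?sa * ?sb * phi m n (x,y)" .
  then show ?thesis unfolding Tprime_def using Dx Dy
    by (simp add: kfac_rot sfac_rot) (auto simp: sgn_if)
qed




definition FF :: "real \<times> real \<Rightarrow> real" where
  "FF z = 4 / ((1 + (fst z)^2) * (1 + (snd z)^2))"

lemma one_plus_sq_pos: "0 < 1 + (x::real)^2"
  by (intro add_pos_nonneg) auto

lemma FF_pos: "FF z > 0"
  unfolding FF_def using one_plus_sq_pos[of "fst z"] one_plus_sq_pos[of "snd z"] by simp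

lemma FF_cont: "continuous_on UNIV FF"
  unfolding FF_def using one_plus_sq_pos
  by (intro continuous_intros) (auto simp: add_nonneg_eq_0_iff)

lemma FF_meas[measurable]: "FF \<in> borel_measurable lborel"
  using borel_measurable_continuous_onI[OF FF_cont] by simp

lemma lam_eq: "lam = density lborel (\<lambda>z. ennreal (FF z))"
  unfolding lam_def lborel_prod FF_def by (simp add: case_prod_unfold)

lemma int_g: "integrable lborel (\<lambda>x::real. inverse (1 + x^2))"
proof -
  have "einterval (-\<infinity>) \<infinity> = UNIV" by (auto simp: einterval_iff)
  then show ?thesis using integrable_inverse_1_plus_square unfolding set_integrable_def by simp
qed

lemma nn_g: "(\<integral>\<^sup>+x. ennreal (inverse (1 + x^2)) \<partial>lborel) < \<infinity>"
proof -
  have "(\<integral>\<^sup>+x. ennreal (norm (inverse (1 + (x::real)^2))) \<partial>lborel) < \<infinity>"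
    using int_g unfolding integrable_iff_bounded by blast
  moreover have "\<And>x::real. norm (inverse (1 + x^2)) = inverse (1 + x^2)"
    using one_plus_sq_pos by (simp add: abs_of_pos)
  ultimately show ?thesis by simp
qed

lemma int_FF: "integrable lborel FF"
proof -
  let ?g = "\<lambda>x::real. inverse (1 + x^2)"
  let ?I = "\<integral>\<^sup>+x. ennreal (?g x) \<partial>lborel"
  have eq: "ennreal (norm (FF (x,y))) = ennreal (4 * ?g x) * ennreal (?g y)" for x y
    using one_plus_sq_pos[of x] one_plus_sq_pos[of y] FF_pos[of "(x,y)"]
    by (simp add: FF_def ennreal_mult[symmetric] field_simps)
  have m: "(\<lambda>z. ennreal (norm (FF z))) \<in> borel_measurable (lborel \<Otimes>\<^sub>M lborel)"
    unfolding lborel_prod by measurable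
  have "(\<integral>\<^sup>+z. ennreal (norm (FF z)) \<partial>lborel) = (\<integral>\<^sup>+z. ennreal (norm (FF z)) \<partial>(lborel \<Otimes>\<^sub>M lborel))"
    by (simp add: lborel_prod)
  also have "\<dots> = (\<integral>\<^sup>+x. \<integral>\<^sup>+y. ennreal (norm (FF (x,y))) \<partial>lborel \<partial>lborel)"
    using lborel.nn_integral_fst[OF m] by simp
  also have "\<dots> = (\<integral>\<^sup>+x. ennreal (4 * ?g x) * ?I \<partial>lborel)"
    unfolding eq by (simp add: nn_integral_cmult)
  also have "\<dots> = (\<integral>\<^sup>+x. ennreal (4 * ?g x) \<partial>lborel) * ?I"
    by (simp add: nn_integral_multc)
  also have "\<dots> = (4 * ?I) * ?I"
    by (simp add: ennreal_mult nn_integral_cmult)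
  also have "\<dots> < \<infinity>" using nn_g by (simp add: ennreal_mult_less_top)
  finally show ?thesis unfolding integrable_iff_bounded by simp
qed




lemma zz_alt: "zz x = (complex_of_real x + \<i>) / complex_of_real (sqrt (1 + x^2))"
  unfolding zz_def by (simp add: complex_eq_iff)

lemma zz_cont: "continuous_on UNIV zz"
  unfolding zz_alt[abs_def] using sqrt_pos1
  by (intro continuous_intros) (auto simp: order.strict_iff_order)

lemma phi_cont: "continuous_on UNIV (phi m n)"
proof -
  have "continuous_on UNIV (\<lambda>z::real\<times>real. zz (fst z))"
    by (rule continuous_on_compose2[OF zz_cont]) (auto intro: continuous_intros)
  moreover have "continuous_on UNIV (\<lambda>z::real\<times>real. zz (snd z))"
    by (rule continuous_on_compose2[OF zz_cont]) (auto intro: continuous_intros)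
  ultimately show ?thesis unfolding phi_def[abs_def] using zz_nz
    by (intro continuous_intros) auto
qed

lemma phi_meas[measurable]: "phi m n \<in> borel_measurable lborel"
  using borel_measurable_continuous_onI[OF phi_cont] by simp

lemma phi_bound: "\<bar>phi m n z\<bar> \<le> 1"
proof -
  have "\<bar>phi m n z\<bar> \<le> norm (zz (fst z) powi m * zz (snd z) powi n)"
    unfolding phi_def by (rule abs_Re_le_cmod)
  also have "\<dots> = 1" by (simp add: norm_mult norm_power_int norm_zz)
  finally show ?thesis .
qed

lemma phi_L2: "L2 (phi m n)"
proof -
  have meas: "phi m n \<in> borel_measurable lam" unfolding lam_eq by simp
  have "integrable lborel (\<lambda>z. FF z *\<^sub>R (phi m n z)^2)"
  proof (rule Bochner_Integration.integrable_bound[OF int_FF])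
    show "(\<lambda>z. FF z *\<^sub>R (phi m n z)^2) \<in> borel_measurable lborel" by measurable
    show "AE z in lborel. norm (FF z *\<^sub>R (phi m n z)^2) \<le> norm (FF z)"
    proof (intro AE_I2)
      fix z
      have "(phi m n z)^2 \<le> 1" using phi_bound[of m n z] by (simp add: abs_square_le_1)
      then show "norm (FF z *\<^sub>R (phi m n z)^2) \<le> norm (FF z)"
        using FF_pos[of z] by (simp add: abs_of_pos mult_left_le)
    qed
  qed
  then have "integrable lam (\<lambda>z. (phi m n z)^2)"
    unfolding lam_eq using FF_pos by (subst integrable_density) (auto simp: less_imp_le)
  with meas show ?thesis unfolding L2_def by simp
qed

lemma AE_lam_lborel: "(AE z in lam. P z) \<longleftrightarrow> (AE z in lborel. P z)"
  unfolding lam_eq using FF_pos by (subst AE_density) auto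

lemma phi_00: "odd m \<Longrightarrow> odd n \<Longrightarrow> phi m n (0,0) \<noteq> 0"
proof -
  assume m: "odd m" and n: "odd n"
  have z0: "zz 0 = \<i>" unfolding zz_alt by simp
  obtain k where k: "m + n = 2 * k" using m n by (metis odd_add evenE)
  have "phi m n (0,0) = Re (\<i> powi m * \<i> powi n)" unfolding phi_def fst_conv snd_conv z0 by (rule refl)
  also have "\<i> powi m * \<i> powi n = \<i> powi (m + n)" by (simp add: power_int_add)
  also have "\<dots> = (\<i> powi 2) powi k" unfolding k by (simp add: power_int_mult)
  also have "\<dots> = (-1) powi k" by simp
  finally have "phi m n (0,0) = Re ((-1) powi k)" .
  moreover have "Re ((-1) powi k) \<noteq> 0" by (simp add: power_int_minus_left)
  ultimately show ?thesis by simp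
qed

lemma phi_not_AE0:
  assumes m: "odd m" and n: "odd n"
  shows "\<not> (AE z in lam. phi m n z = 0)"
proof
  assume "AE z in lam. phi m n z = 0"
  then have ae: "AE z in lborel. phi m n z = 0" using AE_lam_lborel by simp
  let ?U = "{z. phi m n z \<noteq> 0}"
  have opn: "open ?U" by (rule open_Collect_neq[OF phi_cont continuous_on_const])
  have "(0,0) \<in> ?U" using phi_00[OF m n] by simp
  then obtain e where e: "e > 0" "ball (0,0) e \<subseteq> ?U" using opn open_contains_ball by blast
  have Us: "?U \<in> sets lborel" by measurable
  then have "emeasure lborel ?U = 0" using ae by (subst (asm) AE_iff_measurable[of ?U]) auto
  moreover have "emeasure lborel (ball (0::real, 0::real) e) \<le> emeasure lborel ?U"
    using e by (intro emeasure_mono[OF _ Us]) auto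
  moreover have "emeasure lborel (ball (0::real, 0::real) e) > 0"
    using e by (simp add: emeasure_ball)
  ultimately show False by simp
qed

lemma AE_DD: "AE z in lam. DD a (fst z) \<noteq> 0 \<and> DD b (snd z) \<noteq> 0"
proof -
  have sub: "x \<in> {- cos t / sin t}" if "DD t x = 0" for t x
  proof -
    have "sin t \<noteq> 0"
    proof
      assume "sin t = 0"
      then have "cos t = 0" using that by (simp add: DD_def)
      with \<open>sin t = 0\<close> show False using sin_cos_squared_add[of t] by simp
    qed
    then show ?thesis using that by (simp add: DD_def field_simps)
  qed
  let ?N = "{- cos a / sin a} \<times> (UNIV::real set) \<union> (UNIV::real set) \<times> {- cos b / sin b}"
  have "?N \<in> null_sets (lborel \<Otimes>\<^sub>M lborel)"
    by (intro null_sets.Un lborel.times_in_null_sets1 lborel.times_in_null_sets2) auto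
  then have N: "?N \<in> null_sets lborel" by (simp add: lborel_prod)
  have "AE z in lborel. DD a (fst z) \<noteq> 0 \<and> DD b (snd z) \<noteq> 0"
    by (rule AE_I'[OF N]) (auto dest: sub)
  then show ?thesis using AE_lam_lborel by simp
qed




definition subgrp :: "'a::real_vector set \<Rightarrow> bool" where
  "subgrp G \<longleftrightarrow> 0 \<in> G \<and> (\<forall>x\<in>G. \<forall>y\<in>G. x + y \<in> G) \<and> (\<forall>x\<in>G. - x \<in> G)"

lemma subgrp_nat_mult: "subgrp G \<Longrightarrow> x \<in> G \<Longrightarrow> of_nat n *\<^sub>R x \<in> G"
proof (induction n)
  case 0 then show ?case by (simp add: subgrp_def)
next
  case (Suc n)
  have "of_nat (Suc n) *\<^sub>R x = of_nat n *\<^sub>R x + x" by (simp add: algebra_simps)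
  then show ?case using Suc unfolding subgrp_def by metis
qed

lemma subgrp_int_mult: assumes "subgrp G" "x \<in> G" shows "of_int k *\<^sub>R x \<in> G"
proof (cases "k \<ge> 0")
  case True
  then have "(of_int k :: real) = of_nat (nat k)" by simp
  then show ?thesis using subgrp_nat_mult[OF assms, of "nat k"] by (simp only:)
next
  case False
  then have "(of_int k :: real) = - of_nat (nat (-k))" by simp
  then have "of_int k *\<^sub>R x = - (of_nat (nat (-k)) *\<^sub>R x)" by (simp only: scaleR_minus_left)
  moreover have "of_nat (nat (-k)) *\<^sub>R x \<in> G" using subgrp_nat_mult[OF assms] by blast
  ultimately show ?thesis using assms(1) unfolding subgrp_def by simp
qed

lemma subgrp_diff: "subgrp G \<Longrightarrow> x \<in> G \<Longrightarrow> y \<in> G \<Longrightarrow> x - y \<in> G"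
  unfolding subgrp_def by (simp only: diff_conv_add_uminus)

lemma floor_mult_tendsto:
  fixes c :: "nat \<Rightarrow> real"
  assumes c: "\<And>n. c n > 0" "c \<longlonglongrightarrow> 0"
  shows "(\<lambda>n. of_int \<lfloor>t / c n\<rfloor> * c n) \<longlonglongrightarrow> t"
proof -
  have "(\<lambda>n. of_int \<lfloor>t / c n\<rfloor> * c n - t) \<longlonglongrightarrow> 0"
  proof (rule Lim_null_comparison[OF _ c(2)])
    show "\<forall>\<^sub>F n in sequentially. norm (of_int \<lfloor>t / c n\<rfloor> * c n - t) \<le> c n"
    proof (intro always_eventually allI)
      fix n
      have a: "of_int \<lfloor>t / c n\<rfloor> \<le> t / c n" "t / c n < of_int \<lfloor>t / c n\<rfloor> + 1" by linarith+
      have "of_int \<lfloor>t / c n\<rfloor> * c n \<le> t"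
        using mult_right_mono[OF a(1), of "c n"] c(1)[of n] by simp
      moreover have "t < (of_int \<lfloor>t / c n\<rfloor> + 1) * c n"
        using mult_strict_right_mono[OF a(2) c(1)[of n]] c(1)[of n] by simp
      ultimately show "norm (of_int \<lfloor>t / c n\<rfloor> * c n - t) \<le> c n" by (simp add: algebra_simps)
    qed
  qed
  then show ?thesis by (simp add: LIM_zero_iff)
qed

lemma line_in_subgroup:
  fixes G :: "(real \<times> real) set"
  assumes sg: "subgrp G" and cl: "closed G"
    and nd: "\<And>e. e > 0 \<Longrightarrow> \<exists>g\<in>G. g \<noteq> 0 \<and> norm g < e"
  shows "\<exists>v. norm v = 1 \<and> (\<forall>t. t *\<^sub>R v \<in> G)"
proof -
  have "\<forall>n. \<exists>g. g \<in> G \<and> g \<noteq> 0 \<and> norm g < inverse (real (Suc n))"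
  proof
    fix n
    have "inverse (real (Suc n)) > 0" by simp
    from nd[OF this] show "\<exists>g. g \<in> G \<and> g \<noteq> 0 \<and> norm g < inverse (real (Suc n))" by blast
  qed
  then obtain g where g: "\<And>n. g n \<in> G" "\<And>n. g n \<noteq> 0" "\<And>n. norm (g n) < inverse (real (Suc n))"
    by metis
  define u where "u n = inverse (norm (g n)) *\<^sub>R g n" for n
  have u: "\<forall>n. u n \<in> sphere 0 1" using g(2) by (simp add: u_def)
  obtain v r where v: "v \<in> sphere 0 1" "strict_mono r" "(u \<circ> r) \<longlonglongrightarrow> v"
    using seq_compactE[OF compact_imp_seq_compact[OF compact_sphere] u] by blast
  define c where "c n = norm (g (r n))" for n
  have cpos: "c n > 0" for n using g(2) by (simp add: c_def)
  have c0: "c \<longlonglongrightarrow> 0"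
  proof (rule Lim_null_comparison[OF _ LIMSEQ_inverse_real_of_nat])
    show "\<forall>\<^sub>F n in sequentially. norm (c n) \<le> inverse (real (Suc n))"
    proof (intro always_eventually allI)
      fix n
      have "n \<le> r n" using seq_suble[OF v(2)] by simp
      then have "inverse (real (Suc (r n))) \<le> inverse (real (Suc n))"
        by (simp add: le_imp_inverse_le)
      then have "norm (g (r n)) \<le> inverse (real (Suc n))" using g(3)[of "r n"] by linarith
      then show "norm (c n) \<le> inverse (real (Suc n))" by (simp add: c_def)
    qed
  qed
  have "\<forall>t. t *\<^sub>R v \<in> G"
  proof
    fix t
    define h where "h n = of_int \<lfloor>t / c n\<rfloor> *\<^sub>R g (r n)" for n
    have hG: "h n \<in> G" for n unfolding h_def using subgrp_int_mult[OF sg g(1)] by simp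
    have "h n = (of_int \<lfloor>t / c n\<rfloor> * c n) *\<^sub>R (u \<circ> r) n" for n
      using cpos[of n] by (simp add: h_def u_def c_def)
    then have "h = (\<lambda>n. (of_int \<lfloor>t / c n\<rfloor> * c n) *\<^sub>R (u \<circ> r) n)" by auto
    then have "h \<longlonglongrightarrow> t *\<^sub>R v"
      using tendsto_scaleR[OF floor_mult_tendsto[OF cpos c0] v(3)] by simp
    then show "t *\<^sub>R v \<in> G" using closed_sequentially[OF cl, of h] hG by blast
  qed
  then show ?thesis using v(1) by (intro exI[of _ v]) auto
qed




lemma floor_bounds:
  fixes s c :: real assumes c: "c > 0"
  shows "0 \<le> s - of_int \<lfloor>s / c\<rfloor> * c" "s - of_int \<lfloor>s / c\<rfloor> * c < c"
proof -
  have a: "of_int \<lfloor>s / c\<rfloor> \<le> s / c" "s / c < of_int \<lfloor>s / c\<rfloor> + 1" by linarith+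
  have "of_int \<lfloor>s / c\<rfloor> * c \<le> s"
    using mult_right_mono[OF a(1), of c] c by simp
  moreover have "s < (of_int \<lfloor>s / c\<rfloor> + 1) * c"
    using mult_strict_right_mono[OF a(2) c] c by simp
  ultimately show "0 \<le> s - of_int \<lfloor>s / c\<rfloor> * c" "s - of_int \<lfloor>s / c\<rfloor> * c < c"
    by (simp_all add: algebra_simps)
qed

lemma closed_subgrp_R:
  fixes B :: "real set"
  assumes sg: "subgrp B" and cl: "closed B" and b0: "b0 \<in> B" "b0 \<noteq> 0" and nU: "B \<noteq> UNIV"
  shows "\<exists>c>0. B = {of_int k * c | k. True}"
proof -
  define P where "P = {s\<in>B. s > 0}"
  have "\<bar>b0\<bar> \<in> B" using b0 sg unfolding subgrp_def by (cases "b0 \<ge> 0") auto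
  then have Pne: "P \<noteq> {}" using b0 by (auto simp: P_def)
  have bdd: "bdd_below P" unfolding P_def by (rule bdd_belowI[of _ 0]) auto
  define c where "c = Inf P"
  have c0: "c \<ge> 0" unfolding c_def using Pne by (intro cInf_greatest) (auto simp: P_def)
  have cB: "c \<in> B"
  proof -
    have "c \<in> closure P" unfolding c_def by (rule closure_contains_Inf[OF Pne bdd])
    also have "closure P \<subseteq> closure B" by (rule closure_mono) (auto simp: P_def)
    also have "closure B = B" using cl by simp
    finally show ?thesis .
  qed
  have "c > 0"
  proof (rule ccontr)
    assume "\<not> c > 0"
    then have c00: "c = 0" using c0 by simp
    have "B = UNIV"
    proof (intro set_eqI iffI)
      fix y :: real
      have "\<forall>e>0. \<exists>z\<in>B. dist z y < e"
      proof (intro allI impI)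
        fix e :: real assume e: "e > 0"
        then have "Inf P < e" using c00 c_def by simp
        then obtain s where s: "s \<in> P" "s < e" using cInf_less_iff[OF Pne bdd] by blast
        then have sB: "s \<in> B" "s > 0" by (auto simp: P_def)
        have "of_int \<lfloor>y / s\<rfloor> *\<^sub>R s \<in> B" by (rule subgrp_int_mult[OF sg sB(1)])
        moreover have "dist (of_int \<lfloor>y / s\<rfloor> * s) y < e"
          using floor_bounds[OF sB(2), of y] s(2) by (simp add: dist_real_def)
        ultimately show "\<exists>z\<in>B. dist z y < e" by auto
      qed
      then show "y \<in> B" using closed_approachable[OF cl] by blast
    qed auto
    with nU show False by simp
  qed
  have "B = {of_int k * c | k. True}"
  proof (intro set_eqI iffI)
    fix s assume sB: "s \<in> B"
    define r where "r = s - of_int \<lfloor>s / c\<rfloor> * c"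
    have rB: "r \<in> B" unfolding r_def
      using subgrp_diff[OF sg sB subgrp_int_mult[OF sg cB, of "\<lfloor>s / c\<rfloor>"]] by simp
    have r: "0 \<le> r" "r < c" using floor_bounds[OF \<open>c > 0\<close>, of s] by (simp_all add: r_def)
    have "r = 0"
    proof (rule ccontr)
      assume "r \<noteq> 0"
      then have "r \<in> P" using rB r by (auto simp: P_def)
      then have "c \<le> r" unfolding c_def by (rule cInf_lower[OF _ bdd])
      with r show False by simp
    qed
    then show "s \<in> {of_int k * c | k. True}" by (auto simp: r_def)
  next
    fix s assume "s \<in> {of_int k * c | k. True}"
    then obtain k where "s = of_int k * c" by auto
    then show "s \<in> B" using subgrp_int_mult[OF sg cB, of k] by simp
  qed
  then show ?thesis using \<open>c > 0\<close> by blast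
qed




lemma classify:
  fixes G :: "(real \<times> real) set"
  assumes sg: "subgrp G" and cl: "closed G"
    and lat: "\<And>(k::int) (l::int). (2 * pi * of_int k, 2 * pi * of_int l) \<in> G"
    and np1: "(pi, 0) \<notin> G" and np2: "(0, pi) \<notin> G"
    and nd: "\<And>e. e > 0 \<Longrightarrow> \<exists>g\<in>G. g \<noteq> 0 \<and> norm g < e"
  shows "\<exists>m1 m2::int. odd m1 \<and> odd m2 \<and> G = {(a,b). \<exists>k::int. of_int m1 * a + of_int m2 * b = 2 * pi * of_int k}"
proof -
  obtain v where v: "norm v = 1" "\<And>t. t *\<^sub>R v \<in> G"
    using line_in_subgroup[OF sg cl nd] by blast
  obtain v1 v2 where vv: "v = (v1, v2)" by (cases v)
  have vn: "v1^2 + v2^2 = 1" using v(1) unfolding vv by (simp add: norm_Pair)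
  define w where "w = (- v2, v1)"
  define ll where "ll x = - fst x * v2 + snd x * v1" for x :: "real \<times> real"
  have dec: "x = (fst x * v1 + snd x * v2) *\<^sub>R v + ll x *\<^sub>R w" for x
  proof -
    obtain a b where x: "x = (a,b)" by (cases x)
    have e1: "(a * v1 + b * v2) * v1 + (- a * v2 + b * v1) * (- v2) = a * (v1^2 + v2^2)" by algebra
    have e2: "(a * v1 + b * v2) * v2 + (- a * v2 + b * v1) * v1 = b * (v1^2 + v2^2)" by algebra
    show ?thesis unfolding vv w_def ll_def x using e1 e2 vn by (simp add: prod_eq_iff)
  qed
  have memb: "x \<in> G \<longleftrightarrow> ll x *\<^sub>R w \<in> G" for x
  proof
    assume "x \<in> G"
    have "ll x *\<^sub>R w = x - (fst x * v1 + snd x * v2) *\<^sub>R v" using dec[of x] by (simp add: algebra_simps)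
    then show "ll x *\<^sub>R w \<in> G" using subgrp_diff[OF sg \<open>x \<in> G\<close> v(2)] by simp
  next
    assume "ll x *\<^sub>R w \<in> G"
    then have "(fst x * v1 + snd x * v2) *\<^sub>R v + ll x *\<^sub>R w \<in> G"
      using sg v(2) unfolding subgrp_def by blast
    then show "x \<in> G" using dec[of x] by simp
  qed
  define B where "B = {s. s *\<^sub>R w \<in> G}"
  have sgB: "subgrp B" using sg unfolding subgrp_def B_def by (auto simp: scaleR_add_left)
  have clB: "closed B" unfolding B_def
    using continuous_closed_vimage[OF cl, of "\<lambda>s. s *\<^sub>R w"] by (auto simp: vimage_def intro: continuous_intros)
  have GB: "x \<in> G \<longleftrightarrow> ll x \<in> B" for x using memb by (simp add: B_def)
  have b1: "- 2 * pi * v2 \<in> B" using GB[of "(2 * pi * of_int 1, 2 * pi * of_int 0)"] lat[of 1 0] by (simp add: ll_def)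
  have b2: "2 * pi * v1 \<in> B" using GB[of "(2 * pi * of_int 0, 2 * pi * of_int 1)"] lat[of 0 1] by (simp add: ll_def)
  have nU: "B \<noteq> UNIV" using GB[of "(pi,0)"] np1 by auto
  obtain b0 where b0: "b0 \<in> B" "b0 \<noteq> 0"
  proof (cases "v1 = 0")
    case True
    then have "v2 \<noteq> 0" using vn by auto
    then show ?thesis using that[OF b1] by simp
  next
    case False
    then show ?thesis using that[OF b2] by simp
  qed
  obtain c where c: "c > 0" "B = {of_int k * c | k. True}"
    using closed_subgrp_R[OF sgB clB b0 nU] by blast
  obtain k1 where k1: "- 2 * pi * v2 = of_int k1 * c" using b1 c(2) by auto
  obtain k2 where k2: "2 * pi * v1 = of_int k2 * c" using b2 c(2) by auto
  have Geq: "G = {(a,b). \<exists>k::int. of_int k1 * a + of_int k2 * b = 2 * pi * of_int k}"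
  proof (intro set_eqI)
    fix x :: "real \<times> real"
    obtain a b where x: "x = (a,b)" by (cases x)
    have e: "2 * pi * ll x = (of_int k1 * a + of_int k2 * b) * c"
    proof -
      have "2 * pi * ll x = a * (- 2 * pi * v2) + b * (2 * pi * v1)" unfolding ll_def x by (simp add: algebra_simps)
      also have "\<dots> = a * (of_int k1 * c) + b * (of_int k2 * c)" by (simp only: k1 k2)
      also have "\<dots> = (of_int k1 * a + of_int k2 * b) * c" by (simp add: algebra_simps)
      finally show ?thesis .
    qed
    have "x \<in> G \<longleftrightarrow> (\<exists>k::int. ll x = of_int k * c)" using GB c(2) by auto
    also have "\<dots> \<longleftrightarrow> (\<exists>k::int. of_int k1 * a + of_int k2 * b = 2 * pi * of_int k)"
    proof -
      have "ll x = of_int k * c \<longleftrightarrow> of_int k1 * a + of_int k2 * b = 2 * pi * of_int k" for k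
      proof -
        have "ll x = of_int k * c \<longleftrightarrow> 2 * pi * ll x = 2 * pi * (of_int k * c)" by simp
        also have "\<dots> \<longleftrightarrow> (of_int k1 * a + of_int k2 * b) * c = (2 * pi * of_int k) * c"
          unfolding e by (simp add: ac_simps)
        also have "\<dots> \<longleftrightarrow> of_int k1 * a + of_int k2 * b = 2 * pi * of_int k" using c(1) by simp
        finally show ?thesis .
      qed
      then show ?thesis by simp
    qed
    finally show "x \<in> G \<longleftrightarrow> x \<in> {(a,b). \<exists>k::int. of_int k1 * a + of_int k2 * b = 2 * pi * of_int k}"
      unfolding x by simp
  qed
  have o1: "odd k1"
  proof
    assume "even k1" then obtain j where "k1 = 2 * j" by auto
    then have "(pi, 0) \<in> G" unfolding Geq by (auto intro!: exI[of _ j])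
    with np1 show False by simp
  qed
  have o2: "odd k2"
  proof
    assume "even k2" then obtain j where "k2 = 2 * j" by auto
    then have "(0, pi) \<in> G" unfolding Geq by (auto intro!: exI[of _ j])
    with np2 show False by simp
  qed
  show ?thesis using o1 o2 Geq by blast
qed




definition GS :: "((real^2^2) \<times> (real^2^2)) set \<Rightarrow> (real \<times> real) set" where
  "GS S = {z. (rot (fst z), rot (snd z)) \<in> S}"

lemma S_repr: "closed_subgroup_SO2xSO2 S \<Longrightarrow> s \<in> S \<Longrightarrow> \<exists>a b. s = (rot a, rot b)"
  unfolding closed_subgroup_SO2xSO2_def SO2_def by (cases s) blast

lemma S_eq_image: "closed_subgroup_SO2xSO2 S \<Longrightarrow> S = (\<lambda>z. (rot (fst z), rot (snd z))) ` GS S"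
proof (intro set_eqI iffI)
  fix s assume "closed_subgroup_SO2xSO2 S" "s \<in> S"
  then obtain a b where "s = (rot a, rot b)" using S_repr by blast
  then show "s \<in> (\<lambda>z. (rot (fst z), rot (snd z))) ` GS S" using \<open>s \<in> S\<close>
    by (intro image_eqI[of _ _ "(a,b)"]) (auto simp: GS_def)
qed (auto simp: GS_def)

lemma GS_subgrp: assumes "closed_subgroup_SO2xSO2 S" shows "subgrp (GS S)"
  unfolding subgrp_def
proof (intro conjI ballI)
  show "0 \<in> GS S" using assms by (simp add: GS_def closed_subgroup_SO2xSO2_def rot_zero)
next
  fix x y assume "x \<in> GS S" "y \<in> GS S"
  then have "(rot (fst x), rot (snd x)) \<in> S" "(rot (fst y), rot (snd y)) \<in> S" by (auto simp: GS_def)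
  moreover have "\<forall>g\<in>S. \<forall>h\<in>S. (fst g ** fst h, snd g ** snd h) \<in> S"
    using assms unfolding closed_subgroup_SO2xSO2_def by blast
  ultimately have "(rot (fst x) ** rot (fst y), rot (snd x) ** rot (snd y)) \<in> S" by fastforce
  then show "x + y \<in> GS S" by (simp add: GS_def rot_mult)
next
  fix x assume "x \<in> GS S"
  then have "(rot (fst x), rot (snd x)) \<in> S" by (auto simp: GS_def)
  moreover have "\<forall>g\<in>S. (matrix_inv (fst g), matrix_inv (snd g)) \<in> S"
    using assms unfolding closed_subgroup_SO2xSO2_def by blast
  ultimately have "(matrix_inv (rot (fst x)), matrix_inv (rot (snd x))) \<in> S" by fastforce
  then show "- x \<in> GS S" by (simp add: GS_def rot_inv)
qed

lemma GS_closed: assumes "closed_subgroup_SO2xSO2 S" shows "closed (GS S)"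
proof -
  have c: "isCont rot t" for t using continuous_rot by (simp add: continuous_on_eq_continuous_at)
  have "GS S = (\<lambda>z. (rot (fst z), rot (snd z))) -` S" by (auto simp: GS_def)
  moreover have "closed S" using assms by (simp add: closed_subgroup_SO2xSO2_def)
  ultimately show ?thesis
    by (simp add: continuous_closed_vimage continuous_at_compose[OF _ c] continuous_Pair
        continuous_fst continuous_snd isCont_o2[OF _ c] continuous_ident)
qed

lemma rot_2pi: "rot (2 * pi * of_int k) = rot 0"
  by (subst rot_eq_iff) auto

lemma GS_lat: assumes "closed_subgroup_SO2xSO2 S" shows "(2 * pi * of_int k, 2 * pi * of_int l) \<in> GS S"
  using assms by (simp add: GS_def rot_2pi rot_zero closed_subgroup_SO2xSO2_def)

lemma GS_nd:
  assumes cs: "closed_subgroup_SO2xSO2 S" and inf: "infinite S" and e: "e > 0"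
  shows "\<exists>g\<in>GS S. g \<noteq> 0 \<and> norm g < e"
proof (rule ccontr)
  assume nd: "\<not> ?thesis"
  define T where "T = GS S \<inter> cbox (0,0) (2*pi, 2*pi)"
  have "S \<subseteq> (\<lambda>z. (rot (fst z), rot (snd z))) ` T"
  proof
    fix s assume "s \<in> S"
    then obtain a b where s: "s = (rot a, rot b)" using S_repr[OF cs] by blast
    have tp: "2 * pi > 0" by simp
    define a' where "a' = a - of_int \<lfloor>a / (2*pi)\<rfloor> * (2*pi)"
    define b' where "b' = b - of_int \<lfloor>b / (2*pi)\<rfloor> * (2*pi)"
    have ra: "rot a' = rot a" unfolding rot_eq_iff
      by (rule exI[of _ "- \<lfloor>a / (2*pi)\<rfloor>"]) (simp add: a'_def)
    have rb: "rot b' = rot b" unfolding rot_eq_iff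
      by (rule exI[of _ "- \<lfloor>b / (2*pi)\<rfloor>"]) (simp add: b'_def)
    have "a' \<in> {0..2*pi}" "b' \<in> {0..2*pi}" using floor_bounds[OF tp, of a] floor_bounds[OF tp, of b]
      by (auto simp: a'_def b'_def)
    then have "(a', b') \<in> T" using \<open>s \<in> S\<close> s ra rb by (simp add: T_def GS_def cbox_Pair_eq)
    then show "s \<in> (\<lambda>z. (rot (fst z), rot (snd z))) ` T" using s ra rb
      by (intro image_eqI[of _ _ "(a',b')"]) simp_all
  qed
  then have "infinite T" using inf finite_subset finite_imageI by blast
  moreover have "bounded T" unfolding T_def by (intro bounded_Int) auto
  ultimately obtain x where x: "x islimpt T" using bounded_infinite_imp_islimpt[of T T] by blast
  have e2: "e / 2 > 0" using e by simp
  obtain y where y: "y \<in> T" "y \<noteq> x" "dist y x < e / 2" using x e2 unfolding islimpt_approachable by blast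
  have "min (e/2) (dist y x) > 0" using y e by simp
  then obtain z where z: "z \<in> T" "z \<noteq> x" "dist z x < min (e/2) (dist y x)"
    using x unfolding islimpt_approachable by blast
  have "z \<noteq> y" using z by auto
  have "y - z \<in> GS S" using subgrp_diff[OF GS_subgrp[OF cs]] y z by (auto simp: T_def)
  moreover have "y - z \<noteq> 0" using \<open>z \<noteq> y\<close> by simp
  moreover have "norm (y - z) < e"
  proof -
    have "norm (y - z) = dist y z" by (simp add: dist_norm)
    also have "\<dots> \<le> dist y x + dist z x" by (rule dist_triangle2)
    also have "\<dots> < e" using y z by simp
    finally show ?thesis .
  qed
  ultimately show False using nd by blast
qed

lemma Tprime_rot: "Tprime (rot a, rot b) \<phi> (x, y) =
   sgn (DD a x) * sgn (DD b y) * \<phi> (mob (rot a) x, mob (rot b) y)"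
  unfolding Tprime_def by (simp add: kfac_rot sfac_rot)

lemma Tprime_neg1: "Tprime (rot pi, rot 0) \<phi> z = - \<phi> z"
  by (cases z) (simp add: Tprime_rot DD_def mob_rot)

lemma Tprime_neg2: "Tprime (rot 0, rot pi) \<phi> z = - \<phi> z"
  by (cases z) (simp add: Tprime_rot DD_def mob_rot)

lemma no_neg:
  assumes s: "(rot a, rot b) \<in> S" and neg: "\<And>z. Tprime (rot a, rot b) \<phi> z = - \<phi> z"
    and fx: "\<forall>s\<in>S. AE z in lam. Tprime s \<phi> z = \<phi> z"
  shows "AE z in lam. \<phi> z = 0"
proof -
  have "AE z in lam. Tprime (rot a, rot b) \<phi> z = \<phi> z" using fx s by blast
  then show ?thesis by eventually_elim (simp add: neg)
qed




lemma H_eq: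
  fixes m1 m2 :: int
  assumes o1: "odd m1" and o2: "odd m2"
  defines "G \<equiv> {(a,b). \<exists>k::int. of_int m1 * a + of_int m2 * b = 2 * pi * of_int k}"
  shows "\<exists>(N::nat) (q::int) (p::int). N \<ge> 1 \<and> odd N \<and> odd q \<and> odd p \<and>
            coprime q p \<and> (\<lambda>z. (rot (fst z), rot (snd z))) ` G = H N q p"
proof -
  define g where "g = gcd m1 m2"
  define N where "N = nat \<bar>m2\<bar>"
  define q where "q = - (m2 div g)"
  define p where "p = m1 div g"
  have m1nz: "m1 \<noteq> 0" using o1 by auto
  have m2nz: "m2 \<noteq> 0" using o2 by auto
  have gpos: "g > 0" using m1nz by (simp add: g_def)
  have m1e: "m1 = p * g" unfolding p_def g_def by simp
  have m2e: "m2 = - q * g" unfolding q_def g_def by simp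
  have op: "odd p" using o1 m1e by auto
  have oq: "odd q" using o2 m2e by auto
  have cop: "coprime q p"
  proof -
    have "coprime (m2 div g) (m1 div g)" unfolding g_def
      using div_gcd_coprime[of m2 m1] m1nz by (simp add: gcd.commute)
    then show ?thesis unfolding q_def p_def by simp
  qed
  have Npos: "N \<ge> 1" using m2nz by (simp add: N_def)
  have oN: "odd N" using o2 by (simp add: N_def even_nat_iff)
  have qnz: "q \<noteq> 0" using oq by auto
  define \<sigma> where "\<sigma> = sgn m2"
  have sig: "m2 = \<sigma> * int N" "\<sigma> * \<sigma> = 1" using m2nz by (auto simp: \<sigma>_def N_def sgn_if)
  have key: "p * m2 = - (m1 * q)" by (simp add: m1e m2e)
  have key2: "m1 * q + m2 * p = 0" by (simp add: m1e m2e)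
  have "(\<lambda>z. (rot (fst z), rot (snd z))) ` G = H N q p"
  proof (intro set_eqI iffI)
    fix s assume "s \<in> (\<lambda>z. (rot (fst z), rot (snd z))) ` G"
    then obtain a b k where s: "s = (rot a, rot b)" and k: "of_int m1 * a + of_int m2 * b = 2 * pi * of_int k"
      by (auto simp: G_def)
    define \<theta> where "\<theta> = a / of_int q"
    define k' where "k' = \<sigma> * k"
    define i where "i = nat (k' mod int N)"
    define j where "j = k' div int N"
    have kij: "k' = int i + j * int N" using Npos by (simp add: i_def j_def)
    have ra: "of_int q * \<theta> = a" using qnz by (simp add: \<theta>_def)
    have "of_int m2 * (b - of_int p * \<theta>) = 2 * pi * of_int k"
    proof -
      have "of_int m2 * (of_int p * \<theta>) = - of_int m1 * a"
      proof -
        have "of_int m2 * (of_int p * \<theta>) = of_int (p * m2) * \<theta>" by simp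
        also have "\<dots> = - of_int m1 * (of_int q * \<theta>)" unfolding key by simp
        finally show ?thesis using ra by simp
      qed
      then show ?thesis using k by (simp add: algebra_simps)
    qed
    then have bd: "b - of_int p * \<theta> = 2 * pi * of_int k / of_int m2" using m2nz by (simp add: field_simps)
    have "2 * pi * of_int k / of_int m2 = 2 * pi * real i / real N + 2 * pi * of_int j"
    proof -
      have "of_int k / of_int m2 = (of_int k' :: real) / of_int (int N)"
        using sig m2nz Npos unfolding k'_def by (auto simp: field_simps \<sigma>_def sgn_if)
      also have "\<dots> = real i / real N + of_int j" using kij Npos by (simp add: field_simps)
      finally have E: "of_int k / of_int m2 = real i / real N + of_int j" by simp
      have "2 * pi * of_int k / of_int m2 = 2 * pi * (of_int k / of_int m2)" by simp
      also have "\<dots> = 2 * pi * (real i / real N) + 2 * pi * of_int j" unfolding E by (simp add: distrib_left)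
      finally show ?thesis by simp
    qed
    then have "b - (of_int p * \<theta> + 2 * pi * real i / real N) = 2 * pi * of_int j" using bd by simp
    then have rb: "rot b = rot (of_int p * \<theta> + 2 * pi * real i / real N)" unfolding rot_eq_iff by blast
    have "i < N" using Npos unfolding i_def by (simp add: nat_less_iff)
    then show "s \<in> H N q p" unfolding H_def s using ra rb by blast
  next
    fix s assume "s \<in> H N q p"
    then obtain \<theta> i where s: "s = (rot (of_int q * \<theta>), rot (of_int p * \<theta> + 2 * pi * real i / real N))" and "i < N"
      by (auto simp: H_def)
    have "of_int m1 * (of_int q * \<theta>) + of_int m2 * (of_int p * \<theta> + 2 * pi * real i / real N)
          = 2 * pi * of_int (\<sigma> * int i)"
    proof -
      have "of_int m1 * (of_int q * \<theta>) + of_int m2 * (of_int p * \<theta>) = of_int (m1 * q + m2 * p) * \<theta>"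
        by (simp add: algebra_simps)
      also have "\<dots> = 0" using key2 by simp
      finally have z: "of_int m1 * (of_int q * \<theta>) + of_int m2 * (of_int p * \<theta>) = 0" .
      have "of_int m2 * (2 * pi * real i / real N) = 2 * pi * of_int (\<sigma> * int i)"
        using sig Npos by (simp add: field_simps)
      with z show ?thesis by (simp add: algebra_simps)
    qed
    then have "(of_int q * \<theta>, of_int p * \<theta> + 2 * pi * real i / real N) \<in> G"
      unfolding G_def by blast
    then show "s \<in> (\<lambda>z. (rot (fst z), rot (snd z))) ` G" unfolding s by force
  qed
  then show ?thesis using Npos oN oq op cop by blast
qed




theorem mainTheorem6:
  fixes S :: "((real^2^2) \<times> (real^2^2)) set"
  assumes "closed_subgroup_SO2xSO2 S" and "infinite S"
  shows "(\<exists>\<phi>. L2 \<phi> \<and> \<not> (AE z in lam. \<phi> z = 0) \<and>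
            (\<forall>s\<in>S. AE z in lam. Tprime s \<phi> z = \<phi> z))
     \<longleftrightarrow> (\<exists>(N::nat) (q::int) (p::int). N \<ge> 1 \<and> odd N \<and> odd q \<and> odd p \<and>
            coprime q p \<and> S = H N q p)"
proof
  assume "\<exists>\<phi>. L2 \<phi> \<and> \<not> (AE z in lam. \<phi> z = 0) \<and> (\<forall>s\<in>S. AE z in lam. Tprime s \<phi> z = \<phi> z)"
  then obtain \<phi> where nz: "\<not> (AE z in lam. \<phi> z = 0)" and fx: "\<forall>s\<in>S. AE z in lam. Tprime s \<phi> z = \<phi> z"
    by blast
  have np1: "(pi, 0) \<notin> GS S"
  proof
    assume "(pi, 0) \<in> GS S"
    then have "(rot pi, rot 0) \<in> S" by (simp add: GS_def)
    from no_neg[OF this Tprime_neg1 fx] nz show False by simp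
  qed
  have np2: "(0, pi) \<notin> GS S"
  proof
    assume "(0, pi) \<in> GS S"
    then have "(rot 0, rot pi) \<in> S" by (simp add: GS_def)
    from no_neg[OF this Tprime_neg2 fx] nz show False by simp
  qed
  obtain m1 m2 :: int where m: "odd m1" "odd m2"
    and Geq: "GS S = {(a,b). \<exists>k::int. of_int m1 * a + of_int m2 * b = 2 * pi * of_int k}"
    using classify[OF GS_subgrp[OF assms(1)] GS_closed[OF assms(1)] GS_lat[OF assms(1)] np1 np2
        GS_nd[OF assms]] by blast
  show "\<exists>(N::nat) (q::int) (p::int). N \<ge> 1 \<and> odd N \<and> odd q \<and> odd p \<and> coprime q p \<and> S = H N q p"
    using H_eq[OF m] S_eq_image[OF assms(1)] unfolding Geq[symmetric] by metis
next
  assume "\<exists>(N::nat) (q::int) (p::int). N \<ge> 1 \<and> odd N \<and> odd q \<and> odd p \<and> coprime q p \<and> S = H N q p"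
  then obtain N :: nat and q p :: int where N: "N \<ge> 1" "odd N" and qp: "odd q" "odd p" and SH: "S = H N q p"
    by blast
  define m where "m = int N * p"
  define n where "n = - (int N * q)"
  have om: "odd m" "odd n" using N qp by (simp_all add: m_def n_def)
  have "\<forall>s\<in>S. AE z in lam. Tprime s (phi m n) z = phi m n z"
  proof
    fix s assume "s \<in> S"
    then obtain \<theta> i where s: "s = (rot (of_int q * \<theta>), rot (of_int p * \<theta> + 2 * pi * real i / real N))"
      unfolding SH H_def by blast
    let ?a = "of_int q * \<theta>" let ?b = "of_int p * \<theta> + 2 * pi * real i / real N"
    have k: "of_int m * ?a + of_int n * ?b = 2 * pi * of_int (- (q * int i))"
      using N by (simp add: m_def n_def field_simps)
    show "AE z in lam. Tprime s (phi m n) z = phi m n z"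
      using AE_DD[of ?a ?b]
    proof eventually_elim
      case (elim z)
      then show ?case unfolding s using phi_inv[OF om _ _ k, of "fst z" "snd z"] by (cases z) simp
    qed
  qed
  then show "\<exists>\<phi>. L2 \<phi> \<and> \<not> (AE z in lam. \<phi> z = 0) \<and> (\<forall>s\<in>S. AE z in lam. Tprime s \<phi> z = \<phi> z)"
    using phi_L2 phi_not_AE0[OF om] by blast
qed


end
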